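(* Let $Y$ and $X_1,\ldots,X_m$ be real-valued square integrable random variables on a common probability space, write $\mathbf{X}=(X_1,\ldots,X_m)$, and fix $k\in\{1,\ldots,m\}$. Then $\iota_{X_k\mid X_j,\,j\neq k}(Y)=0$ if and only if $E(Y\mid \mathbf{X})=\theta_0+\sum_{j\neq k}\theta_j X_j$ (almost surely) for some real constants $\theta_0$ and $\theta_j$, $j\neq k$.
   Context: Define the set of distributional disturbances $$\mathcal{H}_k=\{\delta(\mathbf{X})\in L^2:\ \delta:\mathbb{R}^m\to\mathbb{R}\text{ measurable},\ E[\delta(\mathbf{X})]=0,\ E[\delta^2(\mathbf{X})]=1,\ E[X_j\delta(\mathbf{X})]=0\text{ for all } j\neq k\}$$ and the partial mean impact of $X_k$ on $Y$, $$\iota_{X_k\mid X_j,\,j\neq k}(Y)=\sup_{\delta(\mathbf{X})\in\mathcal{H}_k}E[Y\delta(\mathbf{X})].$$ *)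

theory Defs
  imports "HOL-Probability.Probability"
begin

text \<open>The random vector X = (X_j)_j, indexed by a finite type 'n (so m = CARD('n)).\<close>
definition rvec :: "('n::finite \<Rightarrow> 'a \<Rightarrow> real) \<Rightarrow> 'a \<Rightarrow> real^'n" where
  "rvec X = (\<lambda>\<omega>. \<chi> j. X j \<omega>)"

definition disturbances :: "'a measure \<Rightarrow> ('n::finite \<Rightarrow> 'a \<Rightarrow> real) \<Rightarrow> 'n \<Rightarrow> ('a \<Rightarrow> real) set" where
  "disturbances M X k =
     {Z. \<exists>\<delta> :: real^'n \<Rightarrow> real. \<delta> \<in> borel_measurable borel \<and>
          Z = (\<lambda>\<omega>. \<delta> (rvec X \<omega>)) \<and>
          integrable M (\<lambda>\<omega>. (Z \<omega>)^2) \<and>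
          (\<integral>\<omega>. Z \<omega> \<partial>M) = 0 \<and>
          (\<integral>\<omega>. (Z \<omega>)^2 \<partial>M) = 1 \<and>
          (\<forall>j. j \<noteq> k \<longrightarrow> (\<integral>\<omega>. X j \<omega> * Z \<omega> \<partial>M) = 0)}"

definition partial_mean_impact :: "'a measure \<Rightarrow> ('a \<Rightarrow> real) \<Rightarrow> ('n::finite \<Rightarrow> 'a \<Rightarrow> real) \<Rightarrow> 'n \<Rightarrow> real" where
  "partial_mean_impact M Y X k =
     (if disturbances M X k = {} then 0
      else (SUP Z \<in> disturbances M X k. \<integral>\<omega>. Y \<omega> * Z \<omega> \<partial>M))"

end

theory Submission
  imports Defs
begin

locale sip =
  fixes L :: "('a \<Rightarrow> real) set" and ip :: "('a \<Rightarrow> real) \<Rightarrow> ('a \<Rightarrow> real) \<Rightarrow> real"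
  assumes L_add: "f \<in> L \<Longrightarrow> g \<in> L \<Longrightarrow> (\<lambda>x. f x + g x) \<in> L"
    and L_scale: "f \<in> L \<Longrightarrow> (\<lambda>x. c * f x) \<in> L"
    and L_zero: "(\<lambda>x. 0) \<in> L"
    and ip_add: "f \<in> L \<Longrightarrow> g \<in> L \<Longrightarrow> h \<in> L \<Longrightarrow> ip (\<lambda>x. f x + g x) h = ip f h + ip g h"
    and ip_scale: "f \<in> L \<Longrightarrow> g \<in> L \<Longrightarrow> ip (\<lambda>x. c * f x) g = c * ip f g"
    and ip_sym: "f \<in> L \<Longrightarrow> g \<in> L \<Longrightarrow> ip f g = ip g f"
    and ip_pos: "f \<in> L \<Longrightarrow> ip f f \<ge> 0"
begin

lemma L_diff: "f \<in> L \<Longrightarrow> g \<in> L \<Longrightarrow> (\<lambda>x. f x - g x) \<in> L"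
  using L_add[of f "\<lambda>x. (-1) * g x"] L_scale[of g "-1"] by simp

lemma L_sum: "(\<And>i. i \<in> I \<Longrightarrow> V i \<in> L) \<Longrightarrow> (\<lambda>x. \<Sum>i\<in>I. c i * V i x) \<in> L"
proof (induction I rule: infinite_finite_induct)
  case (infinite A) then show ?case using L_zero by simp
next
  case empty then show ?case using L_zero by simp
next
  case (insert i I)
  then show ?case using L_add[OF L_scale[of "V i" "c i"], of "\<lambda>x. \<Sum>i\<in>I. c i * V i x"] by simp
qed

lemma ip_diff: "f \<in> L \<Longrightarrow> g \<in> L \<Longrightarrow> h \<in> L \<Longrightarrow> ip (\<lambda>x. f x - g x) h = ip f h - ip g h"
  using ip_add[of f "\<lambda>x. (-1) * g x" h] ip_scale[of g h "-1"] L_scale[of g "-1"] by simp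

lemma ip_sum: "(\<And>i. i \<in> I \<Longrightarrow> V i \<in> L) \<Longrightarrow> h \<in> L \<Longrightarrow>
   ip (\<lambda>x. \<Sum>i\<in>I. c i * V i x) h = (\<Sum>i\<in>I. c i * ip (V i) h)"
proof (induction I rule: infinite_finite_induct)
  case (infinite A) then show ?case using ip_scale[OF L_zero, of h 0] by simp
next
  case empty then show ?case using ip_scale[OF L_zero, of h 0] by simp
next
  case (insert i I)
  have "ip (\<lambda>x. \<Sum>i\<in>insert i I. c i * V i x) h = ip (\<lambda>x. c i * V i x + (\<Sum>i\<in>I. c i * V i x)) h"
    using insert by simp
  also have "\<dots> = c i * ip (V i) h + ip (\<lambda>x. \<Sum>i\<in>I. c i * V i x) h"
    using insert ip_add[OF L_scale[of "V i" "c i"] L_sum[of I V c]] ip_scale by simp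
  finally show ?case using insert by simp
qed

lemma cs_zero:
  assumes f: "f \<in> L" and g: "g \<in> L" and z: "ip g g = 0"
  shows "ip f g = 0"
proof (rule ccontr)
  assume a: "ip f g \<noteq> 0"
  define t where "t = (ip f f + 1) / (2 * ip f g)"
  have gt: "(\<lambda>x. t * g x) \<in> L" using L_scale g by blast
  have "0 \<le> ip (\<lambda>x. f x - t * g x) (\<lambda>x. f x - t * g x)" using ip_pos L_diff f gt by blast
  also have "\<dots> = ip f f - t * ip g f - t * (ip f g - t * ip g g)"
  proof -
    have fd: "(\<lambda>x. f x - t * g x) \<in> L" using L_diff f gt by blast
    have A: "ip (\<lambda>x. f x - t * g x) (\<lambda>x. f x - t * g x) = ip f (\<lambda>x. f x - t * g x) - ip (\<lambda>x. t * g x) (\<lambda>x. f x - t * g x)"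
      using ip_diff[OF f gt fd] .
    have B: "ip (\<lambda>x. t * g x) (\<lambda>x. f x - t * g x) = t * ip g (\<lambda>x. f x - t * g x)" using ip_scale[OF g fd] .
    have C: "ip f (\<lambda>x. f x - t * g x) = ip (\<lambda>x. f x - t * g x) f" using ip_sym[OF f fd] .
    have D: "ip (\<lambda>x. f x - t * g x) f = ip f f - ip (\<lambda>x. t * g x) f" using ip_diff[OF f gt f] .
    have E: "ip (\<lambda>x. t * g x) f = t * ip g f" using ip_scale[OF g f] .
    have F: "ip g (\<lambda>x. f x - t * g x) = ip (\<lambda>x. f x - t * g x) g" using ip_sym[OF g fd] .
    have G: "ip (\<lambda>x. f x - t * g x) g = ip f g - ip (\<lambda>x. t * g x) g" using ip_diff[OF f gt g] .
    have H: "ip (\<lambda>x. t * g x) g = t * ip g g" using ip_scale[OF g g] .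
    show ?thesis unfolding A B C D E F G H ..
  qed
  also have "\<dots> = ip f f - 2 * t * ip f g" using z ip_sym[OF f g] by (simp add: algebra_simps)
  also have "\<dots> = -1" using a by (simp add: t_def field_simps)
  finally show False by simp
qed

lemma projection:
  assumes "finite I" "\<And>i. i \<in> I \<Longrightarrow> V i \<in> L" "C \<in> L"
  shows "\<exists>c. \<forall>i\<in>I. ip (\<lambda>x. C x - (\<Sum>j\<in>I. c j * V j x)) (V i) = 0"
  using assms
proof (induction I arbitrary: C rule: finite_induct)
  case empty then show ?case by simp
next
  case (insert i I)
  have "\<exists>c. \<forall>j\<in>I. ip (\<lambda>x. C x - (\<Sum>j\<in>I. c j * V j x)) (V j) = 0"
    using insert.IH insert.prems by blast
  then obtain c where c: "\<forall>j\<in>I. ip (\<lambda>x. C x - (\<Sum>j\<in>I. c j * V j x)) (V j) = 0"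
    by blast
  obtain d where d: "\<forall>j\<in>I. ip (\<lambda>x. V i x - (\<Sum>j\<in>I. d j * V j x)) (V j) = 0"
    using insert.IH[of "V i"] insert.prems by auto
  define R where "R = (\<lambda>x. C x - (\<Sum>j\<in>I. c j * V j x))"
  define U where "U = (\<lambda>x. V i x - (\<Sum>j\<in>I. d j * V j x))"
  have VL: "\<And>j. j \<in> I \<Longrightarrow> V j \<in> L" "V i \<in> L" using insert.prems by auto
  have RL: "R \<in> L" unfolding R_def using L_diff L_sum VL insert.prems by blast
  have UL: "U \<in> L" unfolding U_def using L_diff L_sum VL by blast
  have Rj: "\<And>j. j \<in> I \<Longrightarrow> ip R (V j) = 0" using c R_def by auto
  have Uj: "\<And>j. j \<in> I \<Longrightarrow> ip U (V j) = 0" using d U_def by auto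
  have Vi: "V i = (\<lambda>x. U x + (\<Sum>j\<in>I. d j * V j x))" unfolding U_def by auto
  have RVi: "ip R (V i) = ip R U + (\<Sum>j\<in>I. d j * ip R (V j))"
  proof -
    have "ip R (V i) = ip (V i) R" using ip_sym RL VL by blast
    also have "\<dots> = ip U R + ip (\<lambda>x. \<Sum>j\<in>I. d j * V j x) R"
      using Vi ip_add[OF UL L_sum[of I V d] RL] VL by metis
    also have "\<dots> = ip R U + (\<Sum>j\<in>I. d j * ip R (V j))"
      using ip_sum[of I V R d] VL RL UL ip_sym by (simp add: ip_sym)
    finally show ?thesis .
  qed
  show ?case
  proof (cases "ip U U = 0")
    case True
    have "ip R U = 0" using cs_zero RL UL True by blast
    then have RVi0: "ip R (V i) = 0" using RVi Rj by simp
    define c' where "c' = c(i := 0)"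
    have "(\<lambda>x. C x - (\<Sum>j\<in>insert i I. c' j * V j x)) = R"
      unfolding R_def c'_def using insert.hyps by (auto simp: fun_eq_iff intro!: sum.cong)
    then show ?thesis using RVi0 Rj by (intro exI[of _ c']) auto
  next
    case False
    define \<alpha> where "\<alpha> = ip R U / ip U U"
    define c' where "c' = (\<lambda>j. c j - \<alpha> * d j)(i := \<alpha>)"
    have aU: "(\<lambda>x. \<alpha> * U x) \<in> L" using L_scale UL by blast
    have eq: "(\<lambda>x. C x - (\<Sum>j\<in>insert i I. c' j * V j x)) = (\<lambda>x. R x - \<alpha> * U x)"
    proof
      fix x
      have "(\<Sum>j\<in>insert i I. c' j * V j x) = \<alpha> * V i x + (\<Sum>j\<in>I. (c j - \<alpha> * d j) * V j x)"
        unfolding c'_def using insert.hyps by (auto intro!: sum.cong)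
      also have "\<dots> = \<alpha> * V i x + (\<Sum>j\<in>I. c j * V j x) - \<alpha> * (\<Sum>j\<in>I. d j * V j x)"
        by (simp add: algebra_simps sum_subtractf sum_distrib_left)
      finally show "C x - (\<Sum>j\<in>insert i I. c' j * V j x) = R x - \<alpha> * U x"
        unfolding R_def U_def by (simp add: algebra_simps)
    qed
    have "\<forall>j\<in>insert i I. ip (\<lambda>x. R x - \<alpha> * U x) (V j) = 0"
    proof
      fix j assume j: "j \<in> insert i I"
      have VjL: "V j \<in> L" using j VL by auto
      have e: "ip (\<lambda>x. R x - \<alpha> * U x) (V j) = ip R (V j) - \<alpha> * ip U (V j)"
        using ip_diff[OF RL aU VjL] ip_scale[OF UL VjL] by simp
      show "ip (\<lambda>x. R x - \<alpha> * U x) (V j) = 0"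
      proof (cases "j = i")
        case True
        have "ip U (V i) = ip U U + (\<Sum>j\<in>I. d j * ip U (V j))"
        proof -
          have "ip U (V i) = ip (V i) U" using ip_sym UL VL by blast
          also have "\<dots> = ip U U + ip (\<lambda>x. \<Sum>j\<in>I. d j * V j x) U"
            using Vi ip_add[OF UL L_sum[of I V d] UL] VL by metis
          also have "\<dots> = ip U U + (\<Sum>j\<in>I. d j * ip U (V j))"
            using ip_sum[of I V U d] VL UL by (simp add: ip_sym)
          finally show ?thesis .
        qed
        then have "ip U (V i) = ip U U" using Uj by simp
        moreover have "ip R (V i) = ip R U" using RVi Rj by simp
        ultimately show ?thesis using e True False by (simp add: \<alpha>_def)
      next
        case False
        then have "j \<in> I" using j by auto
        then show ?thesis using e Rj Uj by simp
      qed
    qed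
    then show ?thesis using eq by (intro exI[of _ c']) simp
  qed
qed

end

definition L2 :: "'a measure \<Rightarrow> ('a \<Rightarrow> real) set" where
  "L2 M = {f. f \<in> borel_measurable M \<and> integrable M (\<lambda>x. (f x)^2)}"

definition ipM :: "'a measure \<Rightarrow> ('a \<Rightarrow> real) \<Rightarrow> ('a \<Rightarrow> real) \<Rightarrow> real" where
  "ipM M f g = (\<integral>x. f x * g x \<partial>M)"

lemma abs_mult_le_sq: "\<bar>a * b\<bar> \<le> a^2 + (b::real)^2"
proof -
  have "0 \<le> (\<bar>a\<bar> - \<bar>b\<bar>)^2" by simp
  moreover have "(\<bar>a\<bar> - \<bar>b\<bar>)^2 = a^2 + b^2 - 2 * \<bar>a * b\<bar>" by (simp add: power2_diff abs_mult)
  moreover have "0 \<le> \<bar>a * b\<bar>" by simp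
  ultimately show ?thesis by linarith
qed

lemma L2_mult:
  assumes "f \<in> L2 M" "g \<in> L2 M"
  shows "integrable M (\<lambda>x. f x * g x)"
proof (rule Bochner_Integration.integrable_bound[where f="\<lambda>x. (f x)^2 + (g x)^2"])
  show "integrable M (\<lambda>x. (f x)^2 + (g x)^2)" using assms by (auto simp: L2_def)
  show "(\<lambda>x. f x * g x) \<in> borel_measurable M" using assms by (auto simp: L2_def)
  show "AE x in M. norm (f x * g x) \<le> norm ((f x)^2 + (g x)^2)"
    using abs_mult_le_sq by (auto intro!: AE_I2)
qed

lemma sip_L2:
  assumes "prob_space M"
  shows "sip (L2 M) (ipM M)"
proof -
  interpret P: prob_space M by fact
  show ?thesis
  proof
    fix f g h c
    show "f \<in> L2 M \<Longrightarrow> g \<in> L2 M \<Longrightarrow> (\<lambda>x. f x + g x) \<in> L2 M"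
    proof -
      assume a: "f \<in> L2 M" "g \<in> L2 M"
      have "integrable M (\<lambda>x. (f x)^2 + (g x)^2 + 2 * f x * g x)"
        using a L2_mult[OF a] by (auto simp: L2_def mult.assoc)
      then show ?thesis using a by (auto simp: L2_def power2_sum)
    qed
    show "f \<in> L2 M \<Longrightarrow> (\<lambda>x. c * f x) \<in> L2 M"
      by (auto simp: L2_def power_mult_distrib)
    show "(\<lambda>x. 0) \<in> L2 M" by (auto simp: L2_def)
    show "f \<in> L2 M \<Longrightarrow> g \<in> L2 M \<Longrightarrow> h \<in> L2 M \<Longrightarrow> ipM M (\<lambda>x. f x + g x) h = ipM M f h + ipM M g h"
      unfolding ipM_def by (simp add: distrib_right L2_mult)
    show "f \<in> L2 M \<Longrightarrow> g \<in> L2 M \<Longrightarrow> ipM M (\<lambda>x. c * f x) g = c * ipM M f g"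
      unfolding ipM_def by (simp add: mult.assoc)
    show "f \<in> L2 M \<Longrightarrow> g \<in> L2 M \<Longrightarrow> ipM M f g = ipM M g f"
      unfolding ipM_def by (simp add: mult.commute)
    show "f \<in> L2 M \<Longrightarrow> 0 \<le> ipM M f f"
      unfolding ipM_def by (simp add: integral_nonneg)
  qed
qed

lemma rvec_measurable:
  assumes "\<And>j. X j \<in> borel_measurable M"
  shows "rvec X \<in> borel_measurable M"
  unfolding rvec_def
  apply (subst borel_measurable_euclidean_space)
  using assms by (auto simp: Basis_vec_def inner_axis)


theorem theorem2:
  fixes M :: "'a measure" and Y :: "'a \<Rightarrow> real"
    and X :: "'n::finite \<Rightarrow> 'a \<Rightarrow> real" and k :: 'n
  assumes "prob_space M"
    and "Y \<in> borel_measurable M" and "integrable M (\<lambda>\<omega>. (Y \<omega>)^2)"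
    and "\<And>j. X j \<in> borel_measurable M"
    and "\<And>j. integrable M (\<lambda>\<omega>. (X j \<omega>)^2)"
  shows "partial_mean_impact M Y X k = 0 \<longleftrightarrow>
    (\<exists>\<theta>0 (\<theta> :: 'n \<Rightarrow> real).
       AE \<omega> in M. real_cond_exp M (vimage_algebra (space M) (rvec X) borel) Y \<omega>
                  = \<theta>0 + (\<Sum>j \<in> UNIV - {k}. \<theta> j * X j \<omega>))"
proof -
  note Pm = assms(1)
  interpret P: prob_space M by fact
  interpret H: sip "L2 M" "ipM M" using sip_L2[OF Pm] .
  define F where "F = vimage_algebra (space M) (rvec X) borel"
  have rX: "rvec X \<in> borel_measurable M" using rvec_measurable assms(4) by blast
  have rXF: "rvec X \<in> borel_measurable F" unfolding F_def by (rule measurable_vimage_algebra1) auto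
  have setsF: "sets F = {rvec X -` A \<inter> space M | A. A \<in> sets borel}"
    unfolding F_def by (rule sets_vimage_algebra2) auto
  have subalg: "subalgebra M F"
    unfolding subalgebra_def using setsF measurable_sets[OF rX] by (auto simp: F_def)
  have "finite_measure_subalgebra M F"
    by (intro_locales) (simp add: finite_measure_subalgebra_axioms_def subalg)
  then interpret S: sigma_finite_subalgebra M F by (rule finite_measure_subalgebra_is_sigma_finite)
  have FM: "f \<in> borel_measurable F \<Longrightarrow> f \<in> borel_measurable M" for f :: "'a \<Rightarrow> real"
    using measurable_from_subalg[OF subalg] by blast
  define Vv :: "'n option \<Rightarrow> real^'n \<Rightarrow> real" where
    "Vv a v = (case a of None \<Rightarrow> 1 | Some j \<Rightarrow> v $ j)" for a v
  define V where "V a \<omega> = Vv a (rvec X \<omega>)" for a \<omega>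
  define I where "I = insert None (Some ` (UNIV - {k}))"
  have Vv_meas[measurable]: "Vv a \<in> borel_measurable borel" for a
    by (cases a) (auto simp: Vv_def[abs_def])
  have VF: "V a \<in> borel_measurable F" for a
    unfolding V_def using measurable_compose[OF rXF Vv_meas] by (simp add: comp_def)
  have V_None: "V None = (\<lambda>_. 1)" by (auto simp: V_def Vv_def)
  have V_Some: "V (Some j) = X j" for j by (auto simp: V_def Vv_def rvec_def)
  have VL: "V a \<in> L2 M" for a
    using VF[THEN FM, of a] assms(5) by (cases a) (auto simp: L2_def V_None V_Some)
  have finI: "finite I" unfolding I_def by simp
  have sumeq: "(\<Sum>a\<in>I. c a * V a \<omega>) = c None + (\<Sum>j\<in>UNIV-{k}. c (Some j) * X j \<omega>)" for c \<omega>
  proof -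
    have "None \<notin> Some ` (UNIV - {k})" by auto
    then have "(\<Sum>a\<in>I. c a * V a \<omega>) = c None * V None \<omega> + (\<Sum>a\<in>Some ` (UNIV - {k}). c a * V a \<omega>)"
      unfolding I_def by (simp add: sum.insert)
    also have "(\<Sum>a\<in>Some ` (UNIV - {k}). c a * V a \<omega>) = (\<Sum>j\<in>UNIV-{k}. c (Some j) * X j \<omega>)"
      by (subst sum.reindex) (auto simp: V_Some)
    finally show ?thesis by (simp add: V_None)
  qed
  define C where "C = real_cond_exp M F Y"
  have YL: "Y \<in> L2 M" using assms(2,3) by (simp add: L2_def)
  have Yint: "integrable M Y" using P.square_integrable_imp_integrable assms(2,3) by blast
  have CF: "C \<in> borel_measurable F" unfolding C_def by simp
  have CL: "C \<in> L2 M"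
  proof -
    have "integrable M (\<lambda>x. (real_cond_exp M F Y x)^2)"
      apply (rule S.integrable_convex_cond_exp[where I=UNIV and q="\<lambda>x. x^2", of Y])
      apply (rule Yint)
      apply simp
      apply simp
      apply (rule assms(3))
      apply (rule convex_power2)
      apply simp_all
      done
    then show ?thesis using FM[OF CF] unfolding L2_def C_def by blast
  qed
  have key: "ipM M Y Z = ipM M C Z" if "Z \<in> L2 M" "Z \<in> borel_measurable F" for Z
  proof -
    have "integrable M (\<lambda>x. Z x * Y x)" using L2_mult that(1) YL by blast
    then have "(\<integral>x. Z x * C x \<partial>M) = (\<integral>x. Z x * Y x \<partial>M)"
      unfolding C_def by (rule S.real_cond_exp_intg(2)[OF _ that(2) assms(2)])
    then show ?thesis unfolding ipM_def by (simp add: mult.commute)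
  qed
  have distZ: "Z \<in> L2 M \<and> Z \<in> borel_measurable F \<and> (\<forall>a\<in>I. ipM M Z (V a) = 0)"
    if Z: "Z \<in> disturbances M X k" for Z
  proof -
    obtain \<delta> :: "real^'n \<Rightarrow> real" where d: "\<delta> \<in> borel_measurable borel" "Z = (\<lambda>\<omega>. \<delta> (rvec X \<omega>))"
      "integrable M (\<lambda>\<omega>. (Z \<omega>)^2)" "(\<integral>\<omega>. Z \<omega> \<partial>M) = 0"
      "\<forall>j. j \<noteq> k \<longrightarrow> (\<integral>\<omega>. X j \<omega> * Z \<omega> \<partial>M) = 0"
      using Z unfolding disturbances_def by blast
    have ZF: "Z \<in> borel_measurable F" using d(1,2) measurable_compose[OF rXF d(1)] by (simp add: comp_def)
    have ZL: "Z \<in> L2 M" using FM[OF ZF] d(3) unfolding L2_def by blast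
    have "ipM M Z (V a) = 0" if "a \<in> I" for a
    proof (cases a)
      case None then show ?thesis using d(4) by (simp add: ipM_def V_None)
    next
      case (Some j)
      then have "j \<noteq> k" using that by (auto simp: I_def)
      then show ?thesis using d(5) Some by (simp add: ipM_def V_Some mult.commute)
    qed
    then show ?thesis using ZF ZL by blast
  qed
  show ?thesis
  proof
    assume pmi: "partial_mean_impact M Y X k = 0"
    define Hk where "Hk = disturbances M X k"
    have neg: "(\<lambda>\<omega>. - Z \<omega>) \<in> Hk" if Zh: "Z \<in> Hk" for Z
    proof -
      obtain \<delta> :: "real^'n \<Rightarrow> real" where d: "\<delta> \<in> borel_measurable borel" "Z = (\<lambda>\<omega>. \<delta> (rvec X \<omega>))"
        "integrable M (\<lambda>\<omega>. (Z \<omega>)^2)" "(\<integral>\<omega>. Z \<omega> \<partial>M) = 0" "(\<integral>\<omega>. (Z \<omega>)^2 \<partial>M) = 1"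
        "\<forall>j. j \<noteq> k \<longrightarrow> (\<integral>\<omega>. X j \<omega> * Z \<omega> \<partial>M) = 0"
        using Zh unfolding disturbances_def Hk_def by blast
      show ?thesis unfolding Hk_def disturbances_def
        apply (rule CollectI, rule exI[of _ "\<lambda>v. - \<delta> v"])
        using d by auto
    qed
    have bound: "(\<integral>\<omega>. Y \<omega> * Z \<omega> \<partial>M) \<le> ((\<integral>\<omega>. (Y \<omega>)^2 \<partial>M) + 1) / 2" if "Z \<in> Hk" for Z
    proof -
      have ZL: "Z \<in> L2 M" using distZ[of Z] that unfolding Hk_def by blast
      have Z2: "(\<integral>\<omega>. (Z \<omega>)^2 \<partial>M) = 1" using that unfolding Hk_def disturbances_def by blast
      have "(\<integral>\<omega>. Y \<omega> * Z \<omega> \<partial>M) \<le> (\<integral>\<omega>. ((Y \<omega>)^2 + (Z \<omega>)^2) / 2 \<partial>M)"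
      proof (rule integral_mono)
        show "integrable M (\<lambda>\<omega>. Y \<omega> * Z \<omega>)" using L2_mult YL ZL by blast
        show "integrable M (\<lambda>\<omega>. ((Y \<omega>)^2 + (Z \<omega>)^2) / 2)" using YL ZL by (auto simp: L2_def)
        fix \<omega>
        have "0 \<le> (Y \<omega> - Z \<omega>)^2" by simp
        then show "Y \<omega> * Z \<omega> \<le> ((Y \<omega>)^2 + (Z \<omega>)^2) / 2" by (simp add: power2_diff)
      qed
      also have "\<dots> = ((\<integral>\<omega>. (Y \<omega>)^2 \<partial>M) + 1) / 2"
        using YL ZL Z2 by (simp add: L2_def)
      finally show ?thesis .
    qed
    have allzero: "(\<integral>\<omega>. Y \<omega> * Z \<omega> \<partial>M) = 0" if "Z \<in> Hk" for Z
    proof -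
      have ne: "Hk \<noteq> {}" using that by blast
      have sup0: "(SUP Z \<in> Hk. \<integral>\<omega>. Y \<omega> * Z \<omega> \<partial>M) = 0"
        using pmi ne unfolding partial_mean_impact_def Hk_def by simp
      have bdd: "bdd_above ((\<lambda>Z. \<integral>\<omega>. Y \<omega> * Z \<omega> \<partial>M) ` Hk)"
        using bound by (intro bdd_aboveI2) blast
      have a: "(\<integral>\<omega>. Y \<omega> * Z \<omega> \<partial>M) \<le> 0"
        using cSUP_upper[of Z Hk "\<lambda>Z. \<integral>\<omega>. Y \<omega> * Z \<omega> \<partial>M", OF that bdd] sup0 by linarith
      have b: "(\<integral>\<omega>. Y \<omega> * - Z \<omega> \<partial>M) \<le> 0"
        using cSUP_upper[of "\<lambda>\<omega>. - Z \<omega>" Hk "\<lambda>Z. \<integral>\<omega>. Y \<omega> * Z \<omega> \<partial>M", OF neg[OF that] bdd] sup0 by linarith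
      have "(\<integral>\<omega>. Y \<omega> * - Z \<omega> \<partial>M) = - (\<integral>\<omega>. Y \<omega> * Z \<omega> \<partial>M)"
        by simp
      then show ?thesis using a b by linarith
    qed
    have "\<exists>c. \<forall>a\<in>I. ipM M (\<lambda>x. C x - (\<Sum>j\<in>I. c j * V j x)) (V a) = 0"
      by (rule H.projection[of I V C, OF finI VL CL])
    then obtain c where c: "\<forall>a\<in>I. ipM M (\<lambda>x. C x - (\<Sum>j\<in>I. c j * V j x)) (V a) = 0"
      by (elim exE) (rule that)
    define Q where "Q = (\<lambda>x. \<Sum>j\<in>I. c j * V j x)"
    define G where "G = (\<lambda>x. C x - Q x)"
    have QL: "Q \<in> L2 M" unfolding Q_def by (rule H.L_sum[OF VL])
    have GL: "G \<in> L2 M" unfolding G_def by (rule H.L_diff[OF CL QL])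
    have QF: "Q \<in> borel_measurable F" unfolding Q_def using VF by measurable
    have GF: "G \<in> borel_measurable F" unfolding G_def using CF QF by measurable
    have Ga: "ipM M G (V a) = 0" if "a \<in> I" for a using c that unfolding G_def Q_def by blast
    have GB: "(\<integral>x. G x * indicator B (rvec X x) \<partial>M) = 0" if B: "B \<in> sets borel" for B
    proof -
      define D where "D = (\<lambda>x. indicator B (rvec X x) :: real)"
      have DF: "D \<in> borel_measurable F" unfolding D_def using rXF B by measurable
      have DM: "D \<in> borel_measurable M" using FM[OF DF] .
      have "integrable M (\<lambda>x. (D x)^2)"
      proof (rule Bochner_Integration.integrable_bound[where f="\<lambda>_. 1::real"])
        show "integrable M (\<lambda>_. 1::real)" by simp
        show "(\<lambda>x. (D x)^2) \<in> borel_measurable M" using DM by (rule borel_measurable_power)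
        show "AE x in M. norm ((D x)^2) \<le> norm (1::real)" by (rule AE_I2) (simp add: D_def indicator_def)
      qed
      then have DL: "D \<in> L2 M" using DM unfolding L2_def by blast
      have "\<exists>e. \<forall>a\<in>I. ipM M (\<lambda>x. D x - (\<Sum>j\<in>I. e j * V j x)) (V a) = 0"
        by (rule H.projection[of I V D, OF finI VL DL])
      then obtain e where e: "\<forall>a\<in>I. ipM M (\<lambda>x. D x - (\<Sum>j\<in>I. e j * V j x)) (V a) = 0"
        by (elim exE) (rule that)
      define Pp where "Pp = (\<lambda>x. \<Sum>j\<in>I. e j * V j x)"
      define r where "r = (\<lambda>x. D x - Pp x)"
      have PL: "Pp \<in> L2 M" unfolding Pp_def by (rule H.L_sum[OF VL])
      have rL: "r \<in> L2 M" unfolding r_def by (rule H.L_diff[OF DL PL])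
      have PF: "Pp \<in> borel_measurable F" unfolding Pp_def using VF by measurable
      have rF: "r \<in> borel_measurable F" unfolding r_def using DF PF by measurable
      have ra: "ipM M r (V a) = 0" if "a \<in> I" for a using e that unfolding r_def Pp_def by blast
      have Yr: "ipM M Y r = 0"
      proof (cases "ipM M r r = 0")
        case True then show ?thesis by (rule H.cs_zero[OF YL rL])
      next
        case False
        define s where "s = sqrt (ipM M r r)"
        have s0: "s > 0" using False H.ip_pos[OF rL] by (simp add: s_def)
        have ss: "s * s = ipM M r r" using H.ip_pos[OF rL] by (simp add: s_def)
        define Z where "Z = (\<lambda>x. (1/s) * r x)"
        have ZL: "Z \<in> L2 M" unfolding Z_def by (rule H.L_scale[OF rL])
        have Zs: "ipM M Z g = (1/s) * ipM M r g" if "g \<in> L2 M" for g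
          using H.ip_scale[OF rL that, of "1/s"] unfolding Z_def[symmetric] .
        have Za: "ipM M Z (V a) = 0" if "a \<in> I" for a
          using Zs[OF VL] ra[OF that] by simp
        have ZZ: "ipM M Z Z = 1"
        proof -
          have "ipM M Z Z = (1/s) * ipM M r Z" by (rule Zs[OF ZL])
          also have "ipM M r Z = ipM M Z r" using H.ip_sym[OF rL ZL] .
          also have "ipM M Z r = (1/s) * ipM M r r" by (rule Zs[OF rL])
          finally show ?thesis using s0 ss False by (simp add: field_simps)
        qed
        define \<delta> where "\<delta> = (\<lambda>v. (1/s) * (indicator B v - (\<Sum>j\<in>I. e j * Vv j v)))"
        have dm: "\<delta> \<in> borel_measurable borel" unfolding \<delta>_def using B by measurable
        have Zd: "Z = (\<lambda>\<omega>. \<delta> (rvec X \<omega>))"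
          by (auto simp: Z_def \<delta>_def r_def D_def Pp_def V_def)
        have "Z \<in> Hk"
          unfolding Hk_def disturbances_def
        proof (rule CollectI, rule exI[of _ \<delta>], intro conjI allI impI)
          show "\<delta> \<in> borel_measurable borel" by (rule dm)
          show "Z = (\<lambda>\<omega>. \<delta> (rvec X \<omega>))" by (rule Zd)
          show "integrable M (\<lambda>\<omega>. (Z \<omega>)^2)" using ZL by (simp add: L2_def)
          show "(\<integral>\<omega>. Z \<omega> \<partial>M) = 0" using Za[of None] by (simp add: ipM_def V_None I_def)
          show "(\<integral>\<omega>. (Z \<omega>)^2 \<partial>M) = 1" using ZZ by (simp add: ipM_def power2_eq_square)
          fix j assume "j \<noteq> k"
          then have "Some j \<in> I" by (simp add: I_def)
          then show "(\<integral>\<omega>. X j \<omega> * Z \<omega> \<partial>M) = 0" using Za[of "Some j"] by (simp add: ipM_def V_Some mult.commute)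
        qed
        then have "ipM M Y Z = 0" using allzero by (simp add: ipM_def)
        then have "ipM M Z Y = 0" using H.ip_sym[OF YL ZL] by simp
        then have "(1/s) * ipM M r Y = 0" using Zs[OF YL] by simp
        then have "ipM M r Y = 0" using s0 by simp
        then show ?thesis using H.ip_sym[OF YL rL] by simp
      qed
      have Cr: "ipM M C r = 0" using key[OF rL rF] Yr by simp
      have Csplit: "C = (\<lambda>x. G x + Q x)" by (simp add: G_def)
      have Qr: "ipM M Q r = 0"
      proof -
        have "ipM M Q r = (\<Sum>a\<in>I. c a * ipM M (V a) r)" unfolding Q_def by (rule H.ip_sum[OF VL rL])
        also have "\<dots> = 0" using ra H.ip_sym[OF VL rL] by (simp add: sum.neutral)
        finally show ?thesis .
      qed
      have Gr: "ipM M G r = 0" using Cr Csplit H.ip_add[OF GL QL rL] Qr by simp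
      have GP: "ipM M Pp G = 0"
      proof -
        have "ipM M Pp G = (\<Sum>a\<in>I. e a * ipM M (V a) G)" unfolding Pp_def by (rule H.ip_sum[OF VL GL])
        also have "\<dots> = 0" using Ga H.ip_sym[OF VL GL] by (simp add: sum.neutral)
        finally show ?thesis .
      qed
      have "ipM M r G = ipM M D G - ipM M Pp G" unfolding r_def using H.ip_diff[OF DL PL GL] .
      then have "ipM M D G = 0" using Gr GP H.ip_sym[OF GL rL] by simp
      then show ?thesis by (simp add: ipM_def D_def mult.commute)
    qed
    have Gint: "integrable M G" using GL unfolding L2_def by (auto intro: P.square_integrable_imp_integrable)
    have "AE x in M. real_cond_exp M F G x = 0"
    proof (rule S.real_cond_exp_charact)
      fix A assume "A \<in> sets F"
      then obtain B where B: "B \<in> sets borel" "A = rvec X -` B \<inter> space M" using setsF by blast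
      have "(\<integral>x\<in>A. G x \<partial>M) = (\<integral>x. G x * indicator B (rvec X x) \<partial>M)"
        unfolding set_lebesgue_integral_def B(2)
        by (rule Bochner_Integration.integral_cong) (auto simp: indicator_def)
      then show "(\<integral>x\<in>A. G x \<partial>M) = (\<integral>x\<in>A. 0 \<partial>M)" using GB[OF B(1)] by (simp add: set_lebesgue_integral_def)
    qed (auto simp: Gint)
    moreover have "AE x in M. real_cond_exp M F G x = G x"
      using S.real_cond_exp_F_meas[OF Gint GF] .
    ultimately have "AE x in M. C x = Q x" by eventually_elim (simp add: G_def)
    then have "AE x in M. C x = c None + (\<Sum>j\<in>UNIV-{k}. c (Some j) * X j x)"
      by eventually_elim (simp add: Q_def sumeq)
    note fin = this
    show "\<exists>\<theta>0 (\<theta> :: 'n \<Rightarrow> real).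
       AE \<omega> in M. real_cond_exp M (vimage_algebra (space M) (rvec X) borel) Y \<omega>
                  = \<theta>0 + (\<Sum>j \<in> UNIV - {k}. \<theta> j * X j \<omega>)"
      by (rule exI[of _ "c None"], rule exI[of _ "\<lambda>j. c (Some j)"], rule fin[unfolded C_def F_def])
  next
    assume "\<exists>\<theta>0 (\<theta> :: 'n \<Rightarrow> real).
       AE \<omega> in M. real_cond_exp M (vimage_algebra (space M) (rvec X) borel) Y \<omega>
                  = \<theta>0 + (\<Sum>j \<in> UNIV - {k}. \<theta> j * X j \<omega>)"
    then have "\<exists>\<theta>0 \<theta>. AE \<omega> in M. C \<omega> = \<theta>0 + (\<Sum>j \<in> UNIV - {k}. \<theta> j * X j \<omega>)"
      by (simp only: C_def F_def)
    then have "\<exists>\<theta>0 \<theta>. AE \<omega> in M. C \<omega> = \<theta>0 + (\<Sum>j \<in> UNIV - {k}. \<theta> j * X j \<omega>)"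
      by (simp only: C_def F_def)
    then show "partial_mean_impact M Y X k = 0"
    proof (elim exE)
    fix \<theta>0 \<theta> assume th: "AE \<omega> in M. C \<omega> = \<theta>0 + (\<Sum>j \<in> UNIV - {k}. \<theta> j * X j \<omega>)"
    define c where "c a = (case a of None \<Rightarrow> \<theta>0 | Some j \<Rightarrow> \<theta> j)" for a
    define Q where "Q = (\<lambda>x. \<Sum>j\<in>I. c j * V j x)"
    have QL: "Q \<in> L2 M" unfolding Q_def by (rule H.L_sum[OF VL])
    have CQ: "AE \<omega> in M. C \<omega> = Q \<omega>" using th by eventually_elim (simp add: Q_def sumeq c_def)
    have zero: "(\<integral>\<omega>. Y \<omega> * Z \<omega> \<partial>M) = 0" if Z: "Z \<in> disturbances M X k" for Z
    proof -
      have ZL: "Z \<in> L2 M" and ZF: "Z \<in> borel_measurable F" and Za: "\<forall>a\<in>I. ipM M Z (V a) = 0"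
        using distZ[OF Z] by auto
      have "ipM M Y Z = ipM M C Z" by (rule key[OF ZL ZF])
      also have "\<dots> = ipM M Q Z"
        unfolding ipM_def
      proof (rule integral_cong_AE)
        show "(\<lambda>x. C x * Z x) \<in> borel_measurable M" using CL ZL unfolding L2_def by (auto intro!: borel_measurable_times)
        show "(\<lambda>x. Q x * Z x) \<in> borel_measurable M" using QL ZL unfolding L2_def by (auto intro!: borel_measurable_times)
        show "AE x in M. C x * Z x = Q x * Z x" using CQ by eventually_elim simp
      qed
      also have "\<dots> = (\<Sum>a\<in>I. c a * ipM M (V a) Z)" unfolding Q_def by (rule H.ip_sum[OF VL ZL])
      also have "\<dots> = 0" using Za H.ip_sym[OF VL ZL] by (simp add: sum.neutral)
      finally show ?thesis by (simp add: ipM_def)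
    qed
    show ?thesis
    proof (cases "disturbances M X k = {}")
      case True then show ?thesis by (simp add: partial_mean_impact_def)
    next
      case False
      have "(SUP Z \<in> disturbances M X k. \<integral>\<omega>. Y \<omega> * Z \<omega> \<partial>M) = (SUP Z \<in> disturbances M X k. 0)"
        using zero by (intro SUP_cong) auto
      also have "\<dots> = 0" using False by simp
      finally show ?thesis using False by (simp add: partial_mean_impact_def)
    qed
    qed
  qed
qed

end
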